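(* Let $k$ be an algebraically closed field and $S\subset\mathbb{P}^3$ a smooth cubic surface. Let $\begin{pmatrix} a_1&\cdots&a_6\\ b_1&\cdots&b_6\end{pmatrix}$ be a Schläfli double-six of lines on $S$. For $i\neq j$ let $\pi_{ij}$ be a linear form defining the plane spanned by the intersecting lines $b_i$ and $a_j$, where the forms $\pi_{12},\pi_{23},\pi_{31},\pi_{13},\pi_{21},\pi_{32}$ are scaled so that $\pi_{12}\pi_{23}\pi_{31}+\pi_{13}\pi_{21}\pi_{32}$ is a defining polynomial of $S$ (such a scaling exists), so that $$\Re=\begin{pmatrix}0&\pi_{12}&\pi_{13}\\ \pi_{21}&0&\pi_{23}\\ \pi_{31}&\pi_{32}&0\end{pmatrix}$$ is a determinantal representation of $S$. Then the set of six skew lines corresponding to $\Re$ is $\{a_1,\dots,a_6\}$ and the set of six skew lines corresponding to $\Re^t$ is $\{b_1,\dots,b_6\}$; that is, the two sets together form the double-six $\begin{pmatrix} a_1&\cdots&a_6\\ b_1&\cdots&b_6\end{pmatrix}$.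
   Context: A Schläfli double-six on $S$ is a set of twelve lines $a_1,\dots,a_6,b_1,\dots,b_6$ on $S$ such that the $a_i$ are mutually skew, the $b_j$ are mutually skew, and $a_i$ meets $b_j$ if and only if $i\neq j$. A determinantal representation of $S$ (defined by a cubic form $F$) is a $3\times 3$ matrix of linear forms $M=z_0M_0+\dots+z_3M_3$ with $\det M=cF$, $c\in k\setminus\{0\}$. For a point $P=(\zeta,\eta,\xi)\in\mathbb{P}^2$, the three entries of $M\cdot(\zeta,\eta,\xi)^t$ are linear forms on $\mathbb{P}^3$; there are exactly six points $P$ for which the three planes so defined intersect in a line, and the six resulting lines lie on $S$ and are mutually skew; they are called the six skew lines corresponding to $M$. *)

theory Defs
  imports "HOL-Analysis.Finite_Cartesian_Product" "HOL-Computational_Algebra.Polynomial"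
begin

text \<open>Projective 3-space over k is modelled via k^4: points are nonzero vectors,
  projective subspaces are linear subspaces (cones) of k^4.\<close>

definition lform :: "'a::field ^ 4 \<Rightarrow> 'a ^ 4 \<Rightarrow> 'a" where
  "lform l x = (\<Sum>i\<in>UNIV. l $ i * x $ i)"

definition cubic_eval :: "(4 \<Rightarrow> 4 \<Rightarrow> 4 \<Rightarrow> 'a::field) \<Rightarrow> 'a ^ 4 \<Rightarrow> 'a" where
  "cubic_eval c x = (\<Sum>i\<in>UNIV. \<Sum>j\<in>UNIV. \<Sum>l\<in>UNIV. c i j l * x $ i * x $ j * x $ l)"

definition cubic_deriv :: "(4 \<Rightarrow> 4 \<Rightarrow> 4 \<Rightarrow> 'a::field) \<Rightarrow> 4 \<Rightarrow> 'a ^ 4 \<Rightarrow> 'a" where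
  "cubic_deriv c m x = (\<Sum>i\<in>UNIV. \<Sum>j\<in>UNIV. \<Sum>l\<in>UNIV. c i j l *
      ((if i = m then 1 else 0) * x $ j * x $ l
     + x $ i * (if j = m then 1 else 0) * x $ l
     + x $ i * x $ j * (if l = m then 1 else 0)))"

definition smooth_cubic :: "(4 \<Rightarrow> 4 \<Rightarrow> 4 \<Rightarrow> 'a::field) \<Rightarrow> bool" where
  "smooth_cubic c \<longleftrightarrow>
     \<not> (\<exists>x. x \<noteq> 0 \<and> cubic_eval c x = 0 \<and> (\<forall>m. cubic_deriv c m x = 0))"

definition proj_line :: "('a::field ^ 4) set \<Rightarrow> bool" where
  "proj_line L \<longleftrightarrow> (\<exists>u v. (\<forall>s t. s *s u + t *s v = 0 \<longrightarrow> s = 0 \<and> t = 0)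
                          \<and> L = {s *s u + t *s v | s t. True})"

definition line_on_surface :: "(4 \<Rightarrow> 4 \<Rightarrow> 4 \<Rightarrow> 'a::field) \<Rightarrow> ('a ^ 4) set \<Rightarrow> bool" where
  "line_on_surface c L \<longleftrightarrow> proj_line L \<and> (\<forall>x\<in>L. cubic_eval c x = 0)"

definition skew :: "('a::field ^ 4) set \<Rightarrow> ('a ^ 4) set \<Rightarrow> bool" where
  "skew L M \<longleftrightarrow> L \<inter> M = {0}"

definition meets :: "('a::field ^ 4) set \<Rightarrow> ('a ^ 4) set \<Rightarrow> bool" where
  "meets L M \<longleftrightarrow> L \<inter> M \<noteq> {0}"

definition double_six ::
  "(4 \<Rightarrow> 4 \<Rightarrow> 4 \<Rightarrow> 'a::field) \<Rightarrow> (nat \<Rightarrow> ('a ^ 4) set) \<Rightarrow> (nat \<Rightarrow> ('a ^ 4) set) \<Rightarrow> bool" where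
  "double_six c a b \<longleftrightarrow>
     (\<forall>i\<in>{1..6}. line_on_surface c (a i) \<and> line_on_surface c (b i)) \<and>
     (\<forall>i\<in>{1..6}. \<forall>j\<in>{1..6}. i \<noteq> j \<longrightarrow> skew (a i) (a j)) \<and>
     (\<forall>i\<in>{1..6}. \<forall>j\<in>{1..6}. i \<noteq> j \<longrightarrow> skew (b i) (b j)) \<and>
     (\<forall>i\<in>{1..6}. \<forall>j\<in>{1..6}. meets (a i) (b j) \<longleftrightarrow> i \<noteq> j)"

definition span2 :: "('a::field ^ 4) set \<Rightarrow> ('a ^ 4) set \<Rightarrow> ('a ^ 4) set" where
  "span2 L M = {u + v | u v. u \<in> L \<and> v \<in> M}"

text \<open>A 3x3 matrix of linear forms, rows and columns indexed by 1,2,3.\<close>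
type_synonym 'a lmatrix = "nat \<Rightarrow> nat \<Rightarrow> 'a ^ 4"

definition lmat_transpose :: "'a lmatrix \<Rightarrow> 'a lmatrix" where
  "lmat_transpose M = (\<lambda>r s. M s r)"

definition planes_locus :: "'a::field lmatrix \<Rightarrow> (nat \<Rightarrow> 'a) \<Rightarrow> ('a ^ 4) set" where
  "planes_locus M p = {x. \<forall>r\<in>{1,2,3}. lform (\<Sum>s\<in>{1,2,3}. p s *s M r s) x = 0}"

definition skew_lines_of :: "'a::field lmatrix \<Rightarrow> ('a ^ 4) set set" where
  "skew_lines_of M = {L. proj_line L \<and>
      (\<exists>p. (\<exists>s\<in>{1,2,3}. p s \<noteq> 0) \<and> L = planes_locus M p)}"

end

theory Submission
  imports Defs "HOL-Analysis.Cartesian_Space"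
begin

definition hp :: "'a::field ^ 4 \<Rightarrow> ('a ^ 4) set" where
  "hp f = {x. lform f x = 0}"

lemma lform_add[simp]: "lform f (x + y) = lform f x + lform f y"
  by (simp add: lform_def sum.distrib algebra_simps)
lemma lform_scale[simp]: "lform f (k *s x) = k * lform f x"
  by (simp add: lform_def sum_distrib_left algebra_simps)
lemma lform_addf[simp]: "lform (f + g) x = lform f x + lform g x"
  by (simp add: lform_def sum.distrib algebra_simps)
lemma lform_scalef[simp]: "lform (k *s f) x = k * lform f x"
  by (simp add: lform_def sum_distrib_left algebra_simps)
lemma lform_zero[simp]: "lform f 0 = 0" "lform 0 x = 0"
  by (simp_all add: lform_def)
lemma lform_neg[simp]: "lform f (- x) = - lform f x"
  by (simp add: lform_def sum_negf)
lemma lform_diff[simp]: "lform f (x - y) = lform f x - lform f y"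
  by (simp add: lform_def sum_subtractf algebra_simps)

lemma subspace_hp: "vec.subspace (hp f)"
  by (auto simp: vec.subspace_def hp_def)

lemma lform_nonzero_ex: assumes "f \<noteq> 0" shows "\<exists>v. lform f v \<noteq> 0"
proof -
  obtain i where "f $ i \<noteq> 0" using assms by (metis vec_eq_iff zero_index)
  have "lform f (axis i 1) = f $ i"
    by (simp add: lform_def axis_def if_distrib cong: if_cong)
  then show ?thesis using \<open>f $ i \<noteq> 0\<close> by metis
qed

lemma dim_univ4: "vec.dim (UNIV :: ('a::field ^ 4) set) = 4"
  by (simp add: vec.dim_UNIV card_cart_basis)

lemma dim_hp: assumes "f \<noteq> 0" shows "vec.dim (hp f) = 3"
proof -
  obtain v where v: "lform f v \<noteq> 0" using lform_nonzero_ex[OF assms] by blast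
  have sub1: "vec.subspace (vec.span {v})" by simp
  have sum: "{x + y |x y. x \<in> hp f \<and> y \<in> vec.span {v}} = UNIV"
  proof (auto)
    fix x
    have "x = (x - (lform f x / lform f v) *s v) + (lform f x / lform f v) *s v" by simp
    moreover have "x - (lform f x / lform f v) *s v \<in> hp f" using v by (simp add: hp_def)
    moreover have "(lform f x / lform f v) *s v \<in> vec.span {v}" unfolding vec.span_singleton by (rule rangeI)
    ultimately show "\<exists>a b. x = a + b \<and> a \<in> hp f \<and> b \<in> vec.span {v}" by blast
  qed
  have int: "hp f \<inter> vec.span {v} = {0}"
    using v by (auto simp: vec.span_singleton hp_def)
  have d1: "vec.dim (vec.span {v}) = 1"
    using v by (cases "v = 0") (auto simp add: vec.dim_span_eq_card_independent vec.independent_insert)  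
  have "vec.dim {x + y |x y. x \<in> hp f \<and> y \<in> vec.span {v}} + vec.dim (hp f \<inter> vec.span {v}) = vec.dim (hp f) + vec.dim (vec.span {v})"
    by (rule vec.dim_sums_Int[OF subspace_hp sub1])
  then show ?thesis using sum int d1 dim_univ4[where 'a='a] by (simp add: eval_nat_numeral)
qed

definition li :: "'a::field ^ 4 \<Rightarrow> 'a ^ 4 \<Rightarrow> bool" where
  "li u v \<longleftrightarrow> (\<forall>s t. s *s u + t *s v = 0 \<longrightarrow> s = 0 \<and> t = 0)"

lemma span2_eq: "vec.span {u, v} = {s *s u + t *s v | s t. True}"
  apply (auto simp: vec.span_insert vec.span_singleton)
   apply (metis add_diff_cancel_left' diff_add_cancel)
  by (metis add_diff_cancel_left')

lemma li_indep: assumes "li u v" shows "vec.independent {u, v}" "u \<noteq> v" "u \<noteq> 0" "v \<noteq> 0"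
proof -
  have A: "\<And>s t. s *s u + t *s v = 0 \<Longrightarrow> s = 0 \<and> t = 0" using assms unfolding li_def by blast
  show "u \<noteq> v"
  proof
    assume "u = v"
    then have "1 *s u + (-1) *s v = 0" by simp
    then show False using A[of 1 "-1"] by simp
  qed
  show u0: "u \<noteq> 0"
  proof
    assume "u = 0"
    then have "1 *s u + 0 *s v = 0" by simp
    then show False using A[of 1 0] by simp
  qed
  show v0: "v \<noteq> 0"
  proof
    assume "v = 0"
    then have "0 *s u + 1 *s v = 0" by simp
    then show False using A[of 0 1] by simp
  qed
  have "u \<notin> vec.span {v}"
  proof
    assume "u \<in> vec.span {v}"
    then obtain k where "u = k *s v" by (auto simp: vec.span_singleton)
    then have "1 *s u + (- k) *s v = 0" by simp
    then show False using A[of 1 "-k"] by simp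
  qed
  then show "vec.independent {u, v}" using v0 \<open>u \<noteq> v\<close>
    by (simp add: vec.independent_insert)
qed

lemma proj_line_li: "proj_line L \<longleftrightarrow> (\<exists>u v. li u v \<and> L = vec.span {u, v})"
  unfolding proj_line_def li_def span2_eq by auto

lemma line_subspace: "proj_line L \<Longrightarrow> vec.subspace L"
  unfolding proj_line_li by auto

lemma line_dim: assumes "proj_line L" shows "vec.dim L = 2"
proof -
  obtain u v where "li u v" "L = vec.span {u,v}" using assms proj_line_li by blast
  then show ?thesis using li_indep[OF \<open>li u v\<close>]
    by (simp add: vec.dim_eq_card_independent)
qed

lemma line_add: "proj_line L \<Longrightarrow> x \<in> L \<Longrightarrow> y \<in> L \<Longrightarrow> x + y \<in> L"
  using line_subspace vec.subspace_add by blast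
lemma line_scale: "proj_line L \<Longrightarrow> x \<in> L \<Longrightarrow> k *s x \<in> L"
  using line_subspace vec.subspace_scale by blast
lemma line_zero: "proj_line L \<Longrightarrow> 0 \<in> L"
  using line_subspace vec.subspace_0 by blast
lemma line_comb: "proj_line L \<Longrightarrow> x \<in> L \<Longrightarrow> y \<in> L \<Longrightarrow> s *s x + t *s y \<in> L"
  by (simp add: line_add line_scale)

lemma line_span2: assumes "proj_line T" "y1 \<in> T" "y2 \<in> T" "li y1 y2"
  shows "T = {s *s y1 + t *s y2 | s t. True}"
proof -
  have "vec.span {y1, y2} \<subseteq> T"
    using assms by (intro vec.span_minimal) (auto simp: line_subspace)
  moreover have "vec.dim (vec.span {y1, y2}) = 2" using li_indep[OF assms(4)]
    by (simp add: vec.dim_eq_card_independent)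
  ultimately have "vec.span {y1, y2} = T"
    using line_dim[OF assms(1)] line_subspace[OF assms(1)]
    by (intro vec.subspace_dim_equal) auto
  then show ?thesis by (simp add: span2_eq)
qed

lemma dim_le0: fixes S :: "('a::field ^ 4) set" assumes "S \<subseteq> {0}" shows "vec.dim S = 0"
  using assms by simp

lemma lines_meet_in_hp:
  assumes "proj_line L" "proj_line M" "f \<noteq> 0" "L \<subseteq> hp f" "M \<subseteq> hp f"
  shows "\<exists>x. x \<noteq> 0 \<and> x \<in> L \<and> x \<in> M"
proof (rule ccontr)
  assume "\<not> ?thesis"
  then have "L \<inter> M \<subseteq> {0}" by auto
  then have d0: "vec.dim (L \<inter> M) = 0" by (rule dim_le0)
  have "{x + y |x y. x \<in> L \<and> y \<in> M} \<subseteq> hp f"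
  proof (safe)
    fix x y assume "x \<in> L" "y \<in> M"
    then have "x \<in> hp f" "y \<in> hp f" using assms by auto
    then show "x + y \<in> hp f" by (simp add: hp_def)
  qed
  then have "vec.dim {x + y |x y. x \<in> L \<and> y \<in> M} \<le> 3"
    using vec.dim_subset[of _ "hp f"] dim_hp[OF assms(3)] by simp
  moreover have "vec.dim {x + y |x y. x \<in> L \<and> y \<in> M} + vec.dim (L \<inter> M) = vec.dim L + vec.dim M"
    by (rule vec.dim_sums_Int) (simp_all add: assms line_subspace)
  ultimately show False using d0 line_dim[OF assms(1)] line_dim[OF assms(2)] by linarith
qed

lemma skew_not_in_hp:
  assumes "proj_line L" "proj_line M" "L \<inter> M = {0}" "f \<noteq> 0" "L \<subseteq> hp f" "M \<subseteq> hp f"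
  shows False
  using lines_meet_in_hp[OF assms(1,2,4,5,6)] assms(3) by blast

lemma hp_inter_line:
  assumes "f \<noteq> 0" "g \<noteq> 0" "hp f \<noteq> hp g" "proj_line l" "l \<subseteq> hp f" "l \<subseteq> hp g"
  shows "hp f \<inter> hp g \<subseteq> l"
proof -
  let ?S = "{x + y |x y. x \<in> hp f \<and> y \<in> hp g}"
  have sS: "vec.subspace ?S" by (intro vec.subspace_sums subspace_hp)
  have fS: "hp f \<subseteq> ?S" by (force intro: exI[of _ 0] simp: hp_def)
  have gS: "hp g \<subseteq> ?S" by (force intro: exI[of _ 0] simp: hp_def)
  have "vec.dim ?S \<ge> 4"
  proof (rule ccontr)
    assume "\<not> ?thesis"
    then have "vec.dim ?S \<le> vec.dim (hp f)" using dim_hp[OF assms(1)] by simp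
    then have e1: "hp f = ?S" using vec.subspace_dim_equal[OF subspace_hp sS fS] by simp
    have "vec.dim (hp g) \<le> vec.dim (hp f)" using dim_hp[OF assms(1)] dim_hp[OF assms(2)] by simp
    then have "hp g = hp f" using vec.subspace_dim_equal[OF subspace_hp subspace_hp, of g f] gS e1 dim_hp[OF assms(1)] dim_hp[OF assms(2)] by simp
    then show False using assms(3) by simp
  qed
  moreover have "vec.dim ?S + vec.dim (hp f \<inter> hp g) = vec.dim (hp f) + vec.dim (hp g)"
    by (rule vec.dim_sums_Int) (simp_all add: subspace_hp)
  ultimately have "vec.dim (hp f \<inter> hp g) \<le> vec.dim l"
    using dim_hp[OF assms(1)] dim_hp[OF assms(2)] line_dim[OF assms(4)] by linarith
  then have "l = hp f \<inter> hp g"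
    using assms by (intro vec.subspace_dim_equal) (auto simp: line_subspace vec.subspace_inter subspace_hp)
  then show ?thesis by simp
qed

lemma lines_sum_univ:
  assumes "proj_line L" "proj_line M" "L \<inter> M = {0}"
  shows "\<exists>y z. y \<in> L \<and> z \<in> M \<and> x = y + z"
proof -
  let ?S = "{x + y |x y. x \<in> L \<and> y \<in> M}"
  have "vec.dim ?S + vec.dim (L \<inter> M) = vec.dim L + vec.dim M"
    by (rule vec.dim_sums_Int) (simp_all add: assms line_subspace)
  then have "vec.dim ?S \<ge> vec.dim (UNIV :: ('a ^ 4) set)" using assms line_dim[OF assms(1)] line_dim[OF assms(2)] dim_univ4[where 'a='a] by simp
  then have "?S = UNIV"
    by (intro vec.subspace_dim_equal) (auto intro: vec.subspace_sums simp: assms line_subspace)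
  then show ?thesis by blast
qed

lemma line_meets_hp:
  assumes "proj_line L" shows "\<exists>x\<in>L. x \<noteq> 0 \<and> lform f x = 0"
proof -
  obtain u v where uv: "li u v" "L = {s *s u + t *s v | s t. True}"
    using assms unfolding proj_line_def li_def by blast
  show ?thesis
  proof (cases "lform f v *s u + (- lform f u) *s v = 0")
    case True
    then have "lform f v = 0 \<and> - lform f u = 0" using uv(1) unfolding li_def by blast
    then have "lform f v = 0" "lform f u = 0" by auto
    have "u = 1 *s u + 0 *s v" by simp
    then have "u \<in> L" using uv(2) by blast
    then show ?thesis using li_indep(3)[OF uv(1)] \<open>lform f u = 0\<close> by blast
  next
    case False
    have "lform f v *s u + (- lform f u) *s v \<in> L" using uv(2) by blast
    moreover have "lform f (lform f v *s u + (- lform f u) *s v) = 0" by simp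
    ultimately show ?thesis using False by blast
  qed
qed

lemma alg_closed_infinite: "infinite (UNIV :: 'a::alg_closed_field set)"
proof
  assume fin: "finite (UNIV::'a set)"
  define q :: "'a poly" where "q = (\<Prod>x\<in>UNIV. [:-x, 1:])"
  have dq: "degree q = card (UNIV::'a set)"
    unfolding q_def by (subst degree_prod_sum_eq) auto
  have "card (UNIV::'a set) > 0" using fin by (simp add: card_gt_0_iff)
  then have "degree (q + 1) = degree q" using dq by (intro degree_add_eq_left) simp
  then have "degree (q + 1) > 0" using dq \<open>card (UNIV::'a set) > 0\<close> by simp
  then obtain y where "poly (q + 1) y = 0" using alg_closed_imp_poly_has_root by blast
  moreover have "poly q y = 0" unfolding q_def poly_prod using fin
    by (intro prod_zero bexI[of _ y]) auto
  ultimately show False by simp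
qed

lemma cubic_poly_zero:
  fixes k0 k1 k2 k3 :: "'a::field"
  assumes inf: "infinite (UNIV :: 'a set)"
    and z: "\<And>t. k0 + k1 * t + k2 * t^2 + k3 * t^3 = 0"
  shows "k0 = 0 \<and> k1 = 0 \<and> k2 = 0 \<and> k3 = 0"
proof -
  let ?p = "[:k0, k1, k2, k3:]"
  have "\<And>t. poly ?p t = 0" using z by (simp add: algebra_simps power2_eq_square power3_eq_cube)
  then have "?p = 0" using poly_roots_finite[of ?p] inf by (metis (mono_tags) UNIV_I finite_subset subsetI mem_Collect_eq)
  then show ?thesis by simp
qed

lemma bincubic:
  fixes s t :: "nat \<Rightarrow> 'a::field"
  assumes I: "finite I" "card I = 4"
    and np: "\<And>i j. i \<in> I \<Longrightarrow> j \<in> I \<Longrightarrow> i \<noteq> j \<Longrightarrow> s i * t j \<noteq> s j * t i"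
    and z: "\<And>i. i \<in> I \<Longrightarrow> k0 * s i^3 + k1 * s i^2 * t i + k2 * s i * t i^2 + k3 * t i^3 = 0"
  shows "k0 = 0 \<and> k1 = 0 \<and> k2 = 0 \<and> k3 = 0"
proof -
  let ?p = "[:k0, k1, k2, k3:]"
  define J where "J = {i\<in>I. s i \<noteq> 0}"
  define Z where "Z = {i\<in>I. s i = 0}"
  have IJZ: "I = J \<union> Z" "J \<inter> Z = {}" unfolding J_def Z_def by auto
  have fJ: "finite J" "finite Z" using I unfolding J_def Z_def by auto
  have cI: "card J + card Z = 4" using card_Un_disjoint[OF fJ IJZ(2)] IJZ(1) I by simp
  have cZ: "card Z \<le> 1"
  proof (rule ccontr)
    assume "\<not> card Z \<le> 1"
    then obtain i j where "i \<in> Z" "j \<in> Z" "i \<noteq> j"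
      by (metis One_nat_def card_le_Suc0_iff_eq fJ(2) not_le)
    then show False using np[of i j] unfolding Z_def by auto
  qed
  define R where "R = (\<lambda>i. t i / s i) ` J"
  have inj: "inj_on (\<lambda>i. t i / s i) J"
  proof (rule inj_onI)
    fix i j assume "i \<in> J" "j \<in> J" "t i / s i = t j / s j"
    then have "s i * t j = s j * t i" unfolding J_def by (auto simp: field_simps)
    then show "i = j" using np \<open>i \<in> J\<close> \<open>j \<in> J\<close> unfolding J_def by blast
  qed
  have cR: "card R = card J" unfolding R_def using card_image[OF inj] .
  have roots: "R \<subseteq> {x. poly ?p x = 0}"
  proof
    fix x assume "x \<in> R"
    then obtain i where i: "i \<in> J" "x = t i / s i" unfolding R_def by blast
    then have si: "s i \<noteq> 0" "i \<in> I" unfolding J_def by auto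
    have "s i ^ 3 * poly ?p x = k0 * s i^3 + k1 * s i^2 * t i + k2 * s i * t i^2 + k3 * t i^3"
    proof -
      have ti: "t i = x * s i" using si i(2) by simp
      show ?thesis unfolding ti by (simp add: algebra_simps power2_eq_square power3_eq_cube)
    qed
    then have "s i ^ 3 * poly ?p x = 0" using z[OF si(2)] by simp
    then show "x \<in> {x. poly ?p x = 0}" using si by simp
  qed
  have "?p = 0"
  proof (rule ccontr)
    assume p0: "?p \<noteq> 0"
    have "card R \<le> degree ?p"
      using card_mono[OF poly_roots_finite[OF p0] roots] card_poly_roots_bound[OF p0] by linarith
    moreover have "degree ?p \<le> 3" by (simp add: degree_pCons_le)
    ultimately have "card J \<le> 3" using cR by simp
    then have "card Z = 1" using cI cZ by simp
    then obtain m where Zm: "Z = {m}" using card_1_singletonE by blast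
    then have m: "m \<in> I" "s m = 0" unfolding Z_def by auto
    have "card J = 3" using cI \<open>card Z = 1\<close> by simp
    then obtain j where "j \<in> J" by fastforce
    then have "j \<in> I" "j \<noteq> m" "s j \<noteq> 0" unfolding J_def using m by auto
    then have "t m \<noteq> 0" using np[OF \<open>j \<in> I\<close> m(1)] m by auto
    then have k3: "k3 = 0" using z[OF m(1)] m by simp
    then have "degree ?p \<le> 2" by (simp add: degree_pCons_le)
    then show False using \<open>card R \<le> degree ?p\<close> cR \<open>card J = 3\<close> by simp
  qed
  then show ?thesis by simp
qed

definition K1 :: "(4 \<Rightarrow> 4 \<Rightarrow> 4 \<Rightarrow> 'a::field) \<Rightarrow> 'a ^ 4 \<Rightarrow> 'a ^ 4 \<Rightarrow> 'a" where
  "K1 c P Q = (\<Sum>m\<in>UNIV. Q $ m * cubic_deriv c m P)"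

lemma sum_swap4: "(\<Sum>m\<in>A. \<Sum>i\<in>B. \<Sum>j\<in>C. \<Sum>l\<in>D. f m i j l) = (\<Sum>i\<in>B. \<Sum>j\<in>C. \<Sum>l\<in>D. \<Sum>m\<in>A. f m i j l)"
proof -
  have "(\<Sum>m\<in>A. \<Sum>i\<in>B. \<Sum>j\<in>C. \<Sum>l\<in>D. f m i j l) = (\<Sum>i\<in>B. \<Sum>m\<in>A. \<Sum>j\<in>C. \<Sum>l\<in>D. f m i j l)"
    by (rule sum.swap)
  also have "\<dots> = (\<Sum>i\<in>B. \<Sum>j\<in>C. \<Sum>m\<in>A. \<Sum>l\<in>D. f m i j l)"
    by (rule sum.cong[OF refl], rule sum.swap)
  also have "\<dots> = (\<Sum>i\<in>B. \<Sum>j\<in>C. \<Sum>l\<in>D. \<Sum>m\<in>A. f m i j l)"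
    by (rule sum.cong[OF refl], rule sum.cong[OF refl], rule sum.swap)
  finally show ?thesis .
qed

lemma K1_alt: "K1 c P Q = (\<Sum>i\<in>UNIV. \<Sum>j\<in>UNIV. \<Sum>l\<in>UNIV. c i j l *
      (Q$i * P$j * P$l + P$i * Q$j * P$l + P$i * P$j * Q$l))"
proof -
  have "K1 c P Q = (\<Sum>m\<in>UNIV. \<Sum>i\<in>UNIV. \<Sum>j\<in>UNIV. \<Sum>l\<in>UNIV. Q $ m * (c i j l *
      ((if i = m then 1 else 0) * P $ j * P $ l
     + P $ i * (if j = m then 1 else 0) * P $ l
     + P $ i * P $ j * (if l = m then 1 else 0))))"
    unfolding K1_def cubic_deriv_def by (simp add: sum_distrib_left)
  also have "\<dots> = (\<Sum>i\<in>UNIV. \<Sum>j\<in>UNIV. \<Sum>l\<in>UNIV. \<Sum>m\<in>UNIV. Q $ m * (c i j l *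
      ((if i = m then 1 else 0) * P $ j * P $ l
     + P $ i * (if j = m then 1 else 0) * P $ l
     + P $ i * P $ j * (if l = m then 1 else 0))))"
    by (rule sum_swap4)
  also have "\<dots> = (\<Sum>i\<in>UNIV. \<Sum>j\<in>UNIV. \<Sum>l\<in>UNIV. c i j l *
      (Q$i * P$j * P$l + P$i * Q$j * P$l + P$i * P$j * Q$l))"
  proof (intro sum.cong refl)
    fix i j l
    have "(\<Sum>m\<in>UNIV. Q $ m * (c i j l *
      ((if i = m then 1 else 0) * P $ j * P $ l
     + P $ i * (if j = m then 1 else 0) * P $ l
     + P $ i * P $ j * (if l = m then 1 else 0)))) =
      (\<Sum>m\<in>UNIV. (if i = m then c i j l * Q $ m * P $ j * P $ l else 0)
       + (if j = m then c i j l * P $ i * Q $ m * P $ l else 0)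
       + (if l = m then c i j l * P $ i * P $ j * Q $ m else 0))"
      by (intro sum.cong refl) (simp add: algebra_simps)
    also have "\<dots> = c i j l * (Q$i * P$j * P$l + P$i * Q$j * P$l + P$i * P$j * Q$l)"
      by (simp add: sum.distrib algebra_simps)
    finally show "(\<Sum>m\<in>UNIV. Q $ m * (c i j l *
      ((if i = m then 1 else 0) * P $ j * P $ l
     + P $ i * (if j = m then 1 else 0) * P $ l
     + P $ i * P $ j * (if l = m then 1 else 0)))) = c i j l * (Q$i * P$j * P$l + P$i * Q$j * P$l + P$i * P$j * Q$l)" .
  qed
  finally show ?thesis .
qed

lemma cubic_expand:
  "cubic_eval c (s *s P + t *s Q) = s^3 * cubic_eval c P + s^2 * t * K1 c P Q
      + s * t^2 * K1 c Q P + t^3 * cubic_eval c Q"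
proof -
  have pt: "\<And>i j l. c i j l * ((s *s P + t *s Q) $ i) * ((s *s P + t *s Q) $ j) * ((s *s P + t *s Q) $ l)
    = s^3 * (c i j l * P $ i * P $ j * P $ l)
    + s^2 * t * (c i j l * (Q$i * P$j * P$l + P$i * Q$j * P$l + P$i * P$j * Q$l))
    + s * t^2 * (c i j l * (P$i * Q$j * Q$l + Q$i * P$j * Q$l + Q$i * Q$j * P$l))
    + t^3 * (c i j l * Q $ i * Q $ j * Q $ l)"
    by (simp add: algebra_simps power2_eq_square power3_eq_cube)
  show ?thesis
    unfolding cubic_eval_def K1_alt pt
    by (simp add: sum.distrib sum_distrib_left algebra_simps)
qed

lemma deriv_vanish:
  assumes inf: "infinite (UNIV :: 'a::field set)"
    and z: "\<And>t. cubic_eval c (x + t *s d) = (0::'a)"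
  shows "K1 c x d = 0"
proof -
  have "\<And>t. cubic_eval c x + K1 c x d * t + K1 c d x * t^2 + cubic_eval c d * t^3 = 0"
  proof -
    fix t
    have "cubic_eval c (1 *s x + t *s d) = 0" using z by simp
    then show "cubic_eval c x + K1 c x d * t + K1 c d x * t^2 + cubic_eval c d * t^3 = 0"
      unfolding cubic_expand by (simp add: algebra_simps)
  qed
  from cubic_poly_zero[OF inf this] show ?thesis by simp
qed

lemma line_zero_4:
  fixes s t :: "nat \<Rightarrow> 'a::field"
  assumes I: "finite I" "card I = 4"
    and np: "\<And>i j. i \<in> I \<Longrightarrow> j \<in> I \<Longrightarrow> i \<noteq> j \<Longrightarrow> s i * t j \<noteq> s j * t i"
    and z: "\<And>i. i \<in> I \<Longrightarrow> cubic_eval c (s i *s P + t i *s Q) = 0"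
  shows "cubic_eval c (x *s P + y *s Q) = 0"
proof -
  have "cubic_eval c P = 0 \<and> K1 c P Q = 0 \<and> K1 c Q P = 0 \<and> cubic_eval c Q = 0"
  proof (rule bincubic[OF I np])
    fix i assume "i \<in> I"
    from z[OF this] show "cubic_eval c P * s i ^ 3 + K1 c P Q * s i^2 * t i + K1 c Q P * s i * t i^2 + cubic_eval c Q * t i ^ 3 = 0"
      unfolding cubic_expand by (simp add: algebra_simps)
  qed auto
  then show ?thesis unfolding cubic_expand by simp
qed

lemma hp_eq: "{x. lform f x = 0} = hp f" by (simp add: hp_def)

locale DS =
  fixes c :: "4 \<Rightarrow> 4 \<Rightarrow> 4 \<Rightarrow> 'a::alg_closed_field"
    and a b :: "nat \<Rightarrow> ('a ^ 4) set"
    and \<pi> :: "nat \<Rightarrow> nat \<Rightarrow> 'a ^ 4"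
    and \<mu> :: 'a
  assumes smooth: "smooth_cubic c"
    and ds: "double_six c a b"
    and planes: "\<forall>i\<in>{1..6}. \<forall>j\<in>{1..6}. i \<noteq> j \<longrightarrow>
                   \<pi> i j \<noteq> 0 \<and> {x. lform (\<pi> i j) x = 0} = span2 (b i) (a j)"
    and mu: "\<mu> \<noteq> 0"
    and scal: "\<forall>x. lform (\<pi> 1 2) x * lform (\<pi> 2 3) x * lform (\<pi> 3 1) x
      + lform (\<pi> 1 3) x * lform (\<pi> 2 1) x * lform (\<pi> 3 2) x = \<mu> * cubic_eval c x"
begin

abbreviation "F \<equiv> cubic_eval c"

lemma inf: "infinite (UNIV :: 'a set)" by (rule alg_closed_infinite)

lemma la: "i \<in> {1..6} \<Longrightarrow> proj_line (a i)"
  using ds unfolding double_six_def line_on_surface_def by blast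
lemma lb: "i \<in> {1..6} \<Longrightarrow> proj_line (b i)"
  using ds unfolding double_six_def line_on_surface_def by blast
lemma Sa: "i \<in> {1..6} \<Longrightarrow> x \<in> a i \<Longrightarrow> F x = 0"
  using ds unfolding double_six_def line_on_surface_def by blast
lemma Sb: "i \<in> {1..6} \<Longrightarrow> x \<in> b i \<Longrightarrow> F x = 0"
  using ds unfolding double_six_def line_on_surface_def by blast
lemma skew_a: "i \<in> {1..6} \<Longrightarrow> j \<in> {1..6} \<Longrightarrow> i \<noteq> j \<Longrightarrow> a i \<inter> a j = {0}"
  using ds unfolding double_six_def skew_def by blast
lemma skew_b: "i \<in> {1..6} \<Longrightarrow> j \<in> {1..6} \<Longrightarrow> i \<noteq> j \<Longrightarrow> b i \<inter> b j = {0}"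
  using ds unfolding double_six_def skew_def by blast
lemma noab: "i \<in> {1..6} \<Longrightarrow> a i \<inter> b i = {0}"
  using ds unfolding double_six_def meets_def by blast
lemma meet_ab: assumes "i \<in> {1..6}" "j \<in> {1..6}" "i \<noteq> j"
  shows "\<exists>x. x \<noteq> 0 \<and> x \<in> a i \<and> x \<in> b j"
proof -
  have "a i \<inter> b j \<noteq> {0}" using ds assms unfolding double_six_def meets_def by blast
  moreover have "0 \<in> a i \<inter> b j" using la lb assms line_zero by blast
  ultimately show ?thesis by blast
qed

lemma pnz: "i \<in> {1..6} \<Longrightarrow> j \<in> {1..6} \<Longrightarrow> i \<noteq> j \<Longrightarrow> \<pi> i j \<noteq> 0"
  using planes by blast
lemma hpeq: "i \<in> {1..6} \<Longrightarrow> j \<in> {1..6} \<Longrightarrow> i \<noteq> j \<Longrightarrow> hp (\<pi> i j) = span2 (b i) (a j)"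
  using planes by (simp add: hp_eq)

lemma b_sub: assumes "i \<in> {1..6}" "j \<in> {1..6}" "i \<noteq> j" shows "b i \<subseteq> hp (\<pi> i j)"
proof
  fix x assume "x \<in> b i"
  moreover have "0 \<in> a j" using la assms line_zero by blast
  ultimately have "x \<in> span2 (b i) (a j)" unfolding span2_def by force
  then show "x \<in> hp (\<pi> i j)" using hpeq assms by simp
qed

lemma a_sub: assumes "i \<in> {1..6}" "j \<in> {1..6}" "i \<noteq> j" shows "a j \<subseteq> hp (\<pi> i j)"
proof
  fix x assume "x \<in> a j"
  moreover have "0 \<in> b i" using lb assms line_zero by blast
  ultimately have "x \<in> span2 (b i) (a j)" unfolding span2_def by force
  then show "x \<in> hp (\<pi> i j)" using hpeq assms by simp
qed

lemma a_not_sub: assumes "r \<in> {1..6}" "s \<in> {1..6}" "j \<in> {1..6}" "r \<noteq> s" "j \<noteq> s"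
  shows "\<not> a j \<subseteq> hp (\<pi> r s)"
  using skew_not_in_hp[OF la[OF assms(3)] la[OF assms(2)] skew_a[OF assms(3,2,5)] pnz[OF assms(1,2,4)] _ a_sub[OF assms(1,2,4)]]
  by blast

lemma b_not_sub: assumes "r \<in> {1..6}" "s \<in> {1..6}" "i \<in> {1..6}" "r \<noteq> s" "i \<noteq> r"
  shows "\<not> b i \<subseteq> hp (\<pi> r s)"
  using skew_not_in_hp[OF lb[OF assms(3)] lb[OF assms(1)] skew_b[OF assms(3,1,5)] pnz[OF assms(1,2,4)] _ b_sub[OF assms(1,2,4)]]
  by blast

lemma inter_b: assumes "i \<in> {1..6}" "j \<in> {1..6}" "k \<in> {1..6}" "i \<noteq> j" "i \<noteq> k" "j \<noteq> k"
  shows "hp (\<pi> i j) \<inter> hp (\<pi> i k) \<subseteq> b i"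
proof (rule hp_inter_line[OF pnz[OF assms(1,2,4)] pnz[OF assms(1,3,5)] _ lb[OF assms(1)] b_sub[OF assms(1,2,4)] b_sub[OF assms(1,3,5)]])
  show "hp (\<pi> i j) \<noteq> hp (\<pi> i k)"
    using a_not_sub[OF assms(1,3,2,5)] a_sub[OF assms(1,2,4)] assms(6) by auto
qed

lemma inter_a: assumes "i \<in> {1..6}" "j \<in> {1..6}" "k \<in> {1..6}" "i \<noteq> j" "k \<noteq> j" "i \<noteq> k"
  shows "hp (\<pi> i j) \<inter> hp (\<pi> k j) \<subseteq> a j"
proof (rule hp_inter_line[OF pnz[OF assms(1,2,4)] pnz[OF assms(3,2,5)] _ la[OF assms(2)] a_sub[OF assms(1,2,4)] a_sub[OF assms(3,2,5)]])
  show "hp (\<pi> i j) \<noteq> hp (\<pi> k j)"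
    using b_not_sub[OF assms(3,2,1,5)] b_sub[OF assms(1,2,4)] assms(6) by auto
qed

definition "M = (\<lambda>r s. if r = s then 0 else \<pi> r s)"

lemma locus_eq: "planes_locus M p = {x.
    p 2 * lform (\<pi> 1 2) x + p 3 * lform (\<pi> 1 3) x = 0 \<and>
    p 1 * lform (\<pi> 2 1) x + p 3 * lform (\<pi> 2 3) x = 0 \<and>
    p 1 * lform (\<pi> 3 1) x + p 2 * lform (\<pi> 3 2) x = 0}"
  unfolding planes_locus_def M_def by (simp add: lform_def sum.distrib sum_distrib_left algebra_simps)

end

lemma not_li: assumes "\<not> li x y" "x \<noteq> 0" "y \<noteq> 0" shows "\<exists>k. x = k *s y"
proof -
  obtain s t where st: "s *s x + t *s y = 0" "\<not> (s = 0 \<and> t = 0)" using assms(1) unfolding li_def by blast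
  have "s \<noteq> 0"
  proof
    assume "s = 0" then have "t *s y = 0" "t \<noteq> 0" using st by auto
    then show False using assms(3) by simp
  qed
  have e: "s *s x = - (t *s y)" using st(1) by (simp add: add_eq_0_iff2)
  have "x = (1/s) *s (s *s x)" using \<open>s \<noteq> 0\<close> by simp
  also have "\<dots> = (- t / s) *s y" unfolding e by simp
  finally have "x = (- t / s) *s y" .
  then show ?thesis by blast
qed


lemma good_point:
  assumes inf: "infinite (UNIV :: 'a::field set)" and L: "proj_line (L :: ('a^4) set)"
    and G: "finite G" "\<And>f. f \<in> G \<Longrightarrow> \<not> L \<subseteq> hp f"
  shows "\<exists>z\<in>L. \<forall>f\<in>G. lform f z \<noteq> 0"
proof -
  obtain u v where uv: "li u v" "L = {s *s u + t *s v | s t. True}"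
    using L unfolding proj_line_def li_def by blast
  define Bad where "Bad f = {t. lform f u + t * lform f v = 0}" for f
  have fin: "finite (Bad f)" if "f \<in> G" for f
  proof (cases "lform f v = 0")
    case True
    have "lform f u \<noteq> 0"
    proof
      assume "lform f u = 0"
      then have "L \<subseteq> hp f" using True uv(2) by (auto simp: hp_def)
      then show False using G(2)[OF that] by blast
    qed
    then have "Bad f = {}" using True unfolding Bad_def by simp
    then show ?thesis by simp
  next
    case False
    have "Bad f \<subseteq> {- lform f u / lform f v}" unfolding Bad_def using False
      by (auto simp: field_simps eq_neg_iff_add_eq_0)
    then show ?thesis using finite_subset by blast
  qed
  have "finite (\<Union>f\<in>G. Bad f)" using fin G(1) by blast
  then obtain t where t: "t \<notin> (\<Union>f\<in>G. Bad f)" using inf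
    by (metis UNIV_I ex_new_if_finite)
  have "1 *s u + t *s v \<in> L" using uv(2) by blast
  moreover have "\<forall>f\<in>G. lform f (1 *s u + t *s v) \<noteq> 0" using t unfolding Bad_def by auto
  ultimately show ?thesis by blast
qed

lemma row_vanish:
  assumes L: "proj_line L" and y: "y \<in> L" "y \<noteq> 0" and z: "z \<in> L"
    and f: "lform f z \<noteq> 0" "lform f y = 0" and l: "lform l y = 0" "lform l z = 0"
    and x: "x \<in> L"
  shows "lform l x = 0"
proof -
  have "li y z" unfolding li_def
  proof (intro allI impI)
    fix s t assume st: "s *s y + t *s z = 0"
    then have "lform f (s *s y + t *s z) = 0" by simp
    then have "t = 0" using f by simp
    then have "s = 0" using st y(2) by simp
    then show "s = 0 \<and> t = 0" using \<open>t = 0\<close> by simp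
  qed
  then have "L = {s *s y + t *s z | s t. True}" using line_span2[OF L y(1) z] by simp
  then obtain s t where "x = s *s y + t *s z" using x by blast
  then show ?thesis using l by simp
qed

lemma two_nz:
  assumes L: "proj_line L" and la: "proj_line a" and la': "proj_line a'" and lb: "proj_line b"
    and aa: "a \<inter> a' = {0}" and fA: "fA \<noteq> 0" and fC: "fC \<noteq> 0"
    and LA: "L \<subseteq> hp fA" and LC: "L \<subseteq> hp fC" and aC: "a \<subseteq> hp fC" and aA: "a' \<subseteq> hp fA"
    and aE: "a \<subseteq> hp fE" and aG: "a' \<subseteq> hp fG" and EG: "hp fE \<inter> hp fG \<subseteq> b"
    and bA: "\<not> b \<subseteq> hp fA" and s: "s \<noteq> 0" and t: "t \<noteq> 0"
    and rel: "\<And>x. x \<in> L \<Longrightarrow> s * lform fE x + t * lform fG x = 0"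
  shows False
proof -
  obtain x where x: "x \<noteq> 0" "x \<in> L" "x \<in> a" using lines_meet_in_hp[OF L la fC LC aC] by blast
  have "lform fE x = 0" using aE x(3) by (auto simp: hp_def)
  then have "lform fG x = 0" using rel[OF x(2)] t by simp
  then have xb: "x \<in> b" using EG aE x(3) by (auto simp: hp_def)
  obtain x' where x': "x' \<noteq> 0" "x' \<in> L" "x' \<in> a'" using lines_meet_in_hp[OF L la' fA LA aA] by blast
  have "lform fG x' = 0" using aG x'(3) by (auto simp: hp_def)
  then have "lform fE x' = 0" using rel[OF x'(2)] s by simp
  then have xb': "x' \<in> b" using EG aG x'(3) by (auto simp: hp_def)
  show False
  proof (cases "li x x'")
    case True
    have "b = {s *s x + t *s x' | s t. True}" using line_span2[OF lb xb xb' True] .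
    moreover have "lform fA x = 0" "lform fA x' = 0" using LA x(2) x'(2) by (auto simp: hp_def)
    then have "\<And>s t. s *s x + t *s x' \<in> hp fA" by (simp add: hp_def)
    ultimately have "b \<subseteq> hp fA" by blast
    then show False using bA by blast
  next
    case False
    then obtain k where "x = k *s x'" using not_li x(1) x'(1) by blast
    then have "x \<in> a'" using line_scale[OF la' x'(3)] by simp
    then show False using aa x by blast
  qed
qed

context DS begin

lemma n16: "(1::nat) \<in> {1..6}" "(2::nat) \<in> {1..6}" "(3::nat) \<in> {1..6}" "(4::nat) \<in> {1..6}"
  "(5::nat) \<in> {1..6}" "(6::nat) \<in> {1..6}" by auto

lemma locus_a1: assumes "p 1 \<noteq> 0" "p 2 = 0" "p 3 = 0" shows "planes_locus M p = a 1"
proof -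
  have "planes_locus M p = hp (\<pi> 2 1) \<inter> hp (\<pi> 3 1)" using assms unfolding locus_eq by (auto simp: hp_def)
  moreover have "hp (\<pi> 2 1) \<inter> hp (\<pi> 3 1) \<subseteq> a 1" by (rule inter_a) auto
  moreover have "a 1 \<subseteq> hp (\<pi> 2 1)" "a 1 \<subseteq> hp (\<pi> 3 1)" by (rule a_sub; simp)+
  ultimately show ?thesis by blast
qed

lemma locus_a2: assumes "p 2 \<noteq> 0" "p 1 = 0" "p 3 = 0" shows "planes_locus M p = a 2"
proof -
  have "planes_locus M p = hp (\<pi> 1 2) \<inter> hp (\<pi> 3 2)" using assms unfolding locus_eq by (auto simp: hp_def)
  moreover have "hp (\<pi> 1 2) \<inter> hp (\<pi> 3 2) \<subseteq> a 2" by (rule inter_a) auto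
  moreover have "a 2 \<subseteq> hp (\<pi> 1 2)" "a 2 \<subseteq> hp (\<pi> 3 2)" by (rule a_sub; simp)+
  ultimately show ?thesis by blast
qed

lemma locus_a3: assumes "p 3 \<noteq> 0" "p 1 = 0" "p 2 = 0" shows "planes_locus M p = a 3"
proof -
  have "planes_locus M p = hp (\<pi> 1 3) \<inter> hp (\<pi> 2 3)" using assms unfolding locus_eq by (auto simp: hp_def)
  moreover have "hp (\<pi> 1 3) \<inter> hp (\<pi> 2 3) \<subseteq> a 3" by (rule inter_a) auto
  moreover have "a 3 \<subseteq> hp (\<pi> 1 3)" "a 3 \<subseteq> hp (\<pi> 2 3)" by (rule a_sub; simp)+
  ultimately show ?thesis by blast
qed

lemma two_nz3: assumes "p 1 \<noteq> 0" "p 2 \<noteq> 0" "p 3 = 0" "proj_line (planes_locus M p)" shows False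
proof (rule two_nz[OF assms(4) la[of 1] la[of 2] lb[of 3], where fA = "\<pi> 1 2" and fC = "\<pi> 2 1"
      and fE = "\<pi> 3 1" and fG = "\<pi> 3 2" and s = "p 1" and t = "p 2"])
  show "planes_locus M p \<subseteq> hp (\<pi> 1 2)" "planes_locus M p \<subseteq> hp (\<pi> 2 1)"
    using assms unfolding locus_eq by (auto simp: hp_def)
  show "\<And>x. x \<in> planes_locus M p \<Longrightarrow> p 1 * lform (\<pi> 3 1) x + p 2 * lform (\<pi> 3 2) x = 0"
    unfolding locus_eq by auto
  show "hp (\<pi> 3 1) \<inter> hp (\<pi> 3 2) \<subseteq> b 3" by (rule inter_b) auto
  show "\<not> b 3 \<subseteq> hp (\<pi> 1 2)" by (rule b_not_sub) auto
  show "a 1 \<inter> a 2 = {0}" by (rule skew_a) auto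
  show "a 1 \<subseteq> hp (\<pi> 2 1)" "a 2 \<subseteq> hp (\<pi> 1 2)" "a 1 \<subseteq> hp (\<pi> 3 1)" "a 2 \<subseteq> hp (\<pi> 3 2)"
    by (rule a_sub; simp)+
  show "\<pi> 1 2 \<noteq> 0" "\<pi> 2 1 \<noteq> 0" by (rule pnz; simp)+
qed (use assms in auto)

lemma two_nz1: assumes "p 2 \<noteq> 0" "p 3 \<noteq> 0" "p 1 = 0" "proj_line (planes_locus M p)" shows False
proof (rule two_nz[OF assms(4) la[of 3] la[of 2] lb[of 1], where fA = "\<pi> 3 2" and fC = "\<pi> 2 3"
      and fE = "\<pi> 1 3" and fG = "\<pi> 1 2" and s = "p 3" and t = "p 2"])
  show "planes_locus M p \<subseteq> hp (\<pi> 3 2)" "planes_locus M p \<subseteq> hp (\<pi> 2 3)"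
    using assms unfolding locus_eq by (auto simp: hp_def)
  show "\<And>x. x \<in> planes_locus M p \<Longrightarrow> p 3 * lform (\<pi> 1 3) x + p 2 * lform (\<pi> 1 2) x = 0"
    unfolding locus_eq by (auto simp: algebra_simps)
  show "hp (\<pi> 1 3) \<inter> hp (\<pi> 1 2) \<subseteq> b 1" by (rule inter_b) auto
  show "\<not> b 1 \<subseteq> hp (\<pi> 3 2)" by (rule b_not_sub) auto
  show "a 3 \<inter> a 2 = {0}" by (rule skew_a) auto
  show "a 3 \<subseteq> hp (\<pi> 2 3)" "a 2 \<subseteq> hp (\<pi> 3 2)" "a 3 \<subseteq> hp (\<pi> 1 3)" "a 2 \<subseteq> hp (\<pi> 1 2)"
    by (rule a_sub; simp)+
  show "\<pi> 3 2 \<noteq> 0" "\<pi> 2 3 \<noteq> 0" by (rule pnz; simp)+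
qed (use assms in auto)

lemma two_nz2: assumes "p 1 \<noteq> 0" "p 3 \<noteq> 0" "p 2 = 0" "proj_line (planes_locus M p)" shows False
proof (rule two_nz[OF assms(4) la[of 1] la[of 3] lb[of 2], where fA = "\<pi> 1 3" and fC = "\<pi> 3 1"
      and fE = "\<pi> 2 1" and fG = "\<pi> 2 3" and s = "p 1" and t = "p 3"])
  show "planes_locus M p \<subseteq> hp (\<pi> 1 3)" "planes_locus M p \<subseteq> hp (\<pi> 3 1)"
    using assms unfolding locus_eq by (auto simp: hp_def)
  show "\<And>x. x \<in> planes_locus M p \<Longrightarrow> p 1 * lform (\<pi> 2 1) x + p 3 * lform (\<pi> 2 3) x = 0"
    unfolding locus_eq by auto
  show "hp (\<pi> 2 1) \<inter> hp (\<pi> 2 3) \<subseteq> b 2" by (rule inter_b) auto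
  show "\<not> b 2 \<subseteq> hp (\<pi> 1 3)" by (rule b_not_sub) auto
  show "a 1 \<inter> a 3 = {0}" by (rule skew_a) auto
  show "a 1 \<subseteq> hp (\<pi> 3 1)" "a 3 \<subseteq> hp (\<pi> 1 3)" "a 1 \<subseteq> hp (\<pi> 2 1)" "a 3 \<subseteq> hp (\<pi> 2 3)"
    by (rule a_sub; simp)+
  show "\<pi> 1 3 \<noteq> 0" "\<pi> 3 1 \<noteq> 0" by (rule pnz; simp)+
qed (use assms in auto)

end

lemma lform_negf[simp]: "lform (- f) x = - lform f x"
  by (simp add: lform_def sum_negf)
lemma lform_difff[simp]: "lform (f - g) x = lform f x - lform g x"
  by (simp add: lform_def sum_subtractf algebra_simps)

context DS begin

lemma a_high: assumes j: "j \<in> {4,5,6}"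
  shows "\<exists>p. (\<exists>s\<in>{1,2,3}. p s \<noteq> 0) \<and> a j = planes_locus M p"
proof -
  have j6: "j \<in> {1..6}" using j by auto
  let ?G = "{\<pi> 1 2, \<pi> 1 3, \<pi> 2 1, \<pi> 2 3, \<pi> 3 1, \<pi> 3 2}"
  have "\<exists>z\<in>a j. \<forall>f\<in>?G. lform f z \<noteq> 0"
  proof (rule good_point[OF inf la[OF j6]])
    fix f assume "f \<in> ?G"
    then show "\<not> a j \<subseteq> hp f" using j
      by (elim insertE; simp) (rule a_not_sub; auto)+
  qed simp
  then obtain z where z: "z \<in> a j" "lform (\<pi> 1 2) z \<noteq> 0" "lform (\<pi> 1 3) z \<noteq> 0"
    "lform (\<pi> 2 1) z \<noteq> 0" "lform (\<pi> 2 3) z \<noteq> 0" "lform (\<pi> 3 1) z \<noteq> 0" "lform (\<pi> 3 2) z \<noteq> 0"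
    by auto
  define A where "A = lform (\<pi> 1 2) z"
  define B where "B = lform (\<pi> 1 3) z"
  define C where "C = lform (\<pi> 2 1) z"
  define D where "D = lform (\<pi> 2 3) z"
  define E where "E = lform (\<pi> 3 1) z"
  define G where "G = lform (\<pi> 3 2) z"
  have det: "A * D * E + B * C * G = 0"
    using scal Sa[OF j6 z(1)] unfolding A_def B_def C_def D_def E_def G_def
    by (metis (no_types, lifting) mult.commute mult_zero_right)
  define p :: "nat \<Rightarrow> 'a" where "p s = (if s = 1 then A * D else if s = 2 then B * C else - (A * C))" for s
  have p: "p 1 = A * D" "p 2 = B * C" "p 3 = - (A * C)" unfolding p_def by auto
  have nz: "A \<noteq> 0" "B \<noteq> 0" "C \<noteq> 0" "D \<noteq> 0" "E \<noteq> 0" "G \<noteq> 0"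
    using z unfolding A_def B_def C_def D_def E_def G_def by auto
  define l1 where "l1 = p 2 *s \<pi> 1 2 + p 3 *s \<pi> 1 3"
  define l2 where "l2 = p 1 *s \<pi> 2 1 + p 3 *s \<pi> 2 3"
  define l3 where "l3 = p 1 *s \<pi> 3 1 + p 2 *s \<pi> 3 2"
  have "lform l1 z = p 2 * A + p 3 * B" unfolding l1_def A_def B_def by simp
  then have l1z: "lform l1 z = 0" unfolding p by (simp add: algebra_simps)
  have "lform l2 z = p 1 * C + p 3 * D" unfolding l2_def C_def D_def by simp
  then have l2z: "lform l2 z = 0" unfolding p by (simp add: algebra_simps)
  have "lform l3 z = p 1 * E + p 2 * G" unfolding l3_def E_def G_def by simp
  then have l3z: "lform l3 z = 0" unfolding p using det by (simp add: algebra_simps)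
  have rowv: "lform (q *s \<pi> r s + q' *s \<pi> r s') x = 0"
    if "x \<in> a j" "r \<in> {1,2,3}" "s \<in> {1,2,3}" "s' \<in> {1,2,3}" "r \<noteq> s" "r \<noteq> s'"
       "lform (q *s \<pi> r s + q' *s \<pi> r s') z = 0" "lform (\<pi> r s) z \<noteq> 0" for x q q' r s s'
  proof -
    have r6: "r \<in> {1..6}" "s \<in> {1..6}" "s' \<in> {1..6}" "j \<noteq> r" using that j by auto
    obtain y where y: "y \<noteq> 0" "y \<in> a j" "y \<in> b r" using meet_ab[OF j6 r6(1) r6(4)] by blast
    have "lform (\<pi> r s) y = 0" "lform (\<pi> r s') y = 0"
      using b_sub[OF r6(1) r6(2) that(5)] b_sub[OF r6(1) r6(3) that(6)] y(3) by (auto simp: hp_def)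
    then show ?thesis
      by (intro row_vanish[OF la[OF j6] y(2) y(1) z(1) that(8) _ _ that(7) that(1)]) auto
  qed
  have sub: "a j \<subseteq> planes_locus M p"
  proof
    fix x assume x: "x \<in> a j"
    have "lform l1 x = 0" unfolding l1_def by (rule rowv[OF x]) (use l1z z in \<open>auto simp: l1_def\<close>)
    moreover have "lform l2 x = 0" unfolding l2_def by (rule rowv[OF x]) (use l2z z in \<open>auto simp: l2_def\<close>)
    moreover have "lform l3 x = 0" unfolding l3_def by (rule rowv[OF x]) (use l3z z in \<open>auto simp: l3_def\<close>)
    ultimately show "x \<in> planes_locus M p" unfolding locus_eq l1_def l2_def l3_def by simp
  qed
  have l1nz: "l1 \<noteq> 0"
  proof
    assume "l1 = 0"
    have "\<not> a 2 \<subseteq> hp (\<pi> 1 3)" by (rule a_not_sub) auto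
    then obtain x where x: "x \<in> a 2" "lform (\<pi> 1 3) x \<noteq> 0" by (auto simp: hp_def)
    have "lform (\<pi> 1 2) x = 0" using a_sub[of 1 2] x(1) by (auto simp: hp_def)
    then have "lform l1 x = p 3 * lform (\<pi> 1 3) x" unfolding l1_def by simp
    then show False using \<open>l1 = 0\<close> x(2) p nz by simp
  qed
  have l2nz: "l2 \<noteq> 0"
  proof
    assume "l2 = 0"
    have "\<not> a 1 \<subseteq> hp (\<pi> 2 3)" by (rule a_not_sub) auto
    then obtain x where x: "x \<in> a 1" "lform (\<pi> 2 3) x \<noteq> 0" by (auto simp: hp_def)
    have "lform (\<pi> 2 1) x = 0" using a_sub[of 2 1] x(1) by (auto simp: hp_def)
    then have "lform l2 x = p 3 * lform (\<pi> 2 3) x" unfolding l2_def by simp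
    then show False using \<open>l2 = 0\<close> x(2) p nz by simp
  qed
  have b1: "b 1 \<subseteq> hp l1" using b_sub[of 1 2] b_sub[of 1 3] unfolding l1_def by (auto simp: hp_def subset_iff)
  have b2: "b 2 \<subseteq> hp l2" using b_sub[of 2 1] b_sub[of 2 3] unfolding l2_def by (auto simp: hp_def subset_iff)
  have neq: "hp l1 \<noteq> hp l2"
  proof
    assume "hp l1 = hp l2"
    then show False using skew_not_in_hp[OF lb[of 1] lb[of 2] skew_b[of 1 2] l1nz b1] b2 by auto
  qed
  have "hp l1 \<inter> hp l2 \<subseteq> a j"
    by (rule hp_inter_line[OF l1nz l2nz neq la[OF j6]]) (use sub in \<open>auto simp: locus_eq l1_def l2_def hp_def\<close>)
  moreover have "planes_locus M p \<subseteq> hp l1 \<inter> hp l2"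
    unfolding locus_eq l1_def l2_def by (auto simp: hp_def)
  ultimately have "a j = planes_locus M p" using sub by blast
  moreover have "p 1 \<noteq> 0" using p nz by simp
  ultimately show ?thesis by blast
qed

end

definition Phi :: "'a::field^4 \<Rightarrow> 'a^4 \<Rightarrow> 'a^4 \<Rightarrow> 'a^4 \<Rightarrow> 'a \<Rightarrow> 'a \<Rightarrow> 'a \<Rightarrow> 'a \<Rightarrow> 'a^4" where
  "Phi w1 w2 z1 z2 s t \<alpha> \<beta> = \<alpha> *s (s *s w1 + t *s w2) + \<beta> *s (s *s z1 + t *s z2)"

definition ind4 :: "'a::field^4 \<Rightarrow> 'a^4 \<Rightarrow> 'a^4 \<Rightarrow> 'a^4 \<Rightarrow> bool" where
  "ind4 w1 w2 z1 z2 \<longleftrightarrow> (\<forall>c1 c2 c3 c4. c1 *s w1 + c2 *s w2 + c3 *s z1 + c4 *s z2 = 0 \<longrightarrow>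
      c1 = 0 \<and> c2 = 0 \<and> c3 = 0 \<and> c4 = 0)"

lemma ind4_eq: assumes "ind4 w1 w2 z1 z2"
  and "c1 *s w1 + c2 *s w2 + c3 *s z1 + c4 *s z2 = d1 *s w1 + d2 *s w2 + d3 *s z1 + d4 *s z2"
  shows "c1 = d1 \<and> c2 = d2 \<and> c3 = d3 \<and> c4 = d4"
proof -
  have "(c1 - d1) *s w1 + (c2 - d2) *s w2 + (c3 - d3) *s z1 + (c4 - d4) *s z2 = 
     (c1 *s w1 + c2 *s w2 + c3 *s z1 + c4 *s z2) - (d1 *s w1 + d2 *s w2 + d3 *s z1 + d4 *s z2)"
    by (simp add: vec_eq_iff algebra_simps)
  also have "\<dots> = 0" using assms(2) by simp
  finally show ?thesis using assms(1) unfolding ind4_def by (metis right_minus_eq)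
qed

lemma basis3:
  assumes l: "proj_line B1" "proj_line B2" "proj_line B3"
    and sk: "B1 \<inter> B2 = {0}" "B1 \<inter> B3 = {0}" "B2 \<inter> B3 = {0}"
  shows "\<exists>w1 w2 z1 z2. ind4 w1 w2 z1 z2 \<and> B1 = {s *s w1 + t *s w2 | s t. True}
     \<and> B2 = {s *s z1 + t *s z2 | s t. True} \<and> B3 = {s *s (w1 + z1) + t *s (w2 + z2) | s t. True}"
proof -
  obtain u v where uv: "li u v" "B3 = {s *s u + t *s v | s t. True}"
    using l(3) unfolding proj_line_def li_def by blast
  obtain w1 z1 where wz1: "w1 \<in> B1" "z1 \<in> B2" "u = w1 + z1" using lines_sum_univ[OF l(1,2) sk(1)] by blast
  obtain w2 z2 where wz2: "w2 \<in> B1" "z2 \<in> B2" "v = w2 + z2" using lines_sum_univ[OF l(1,2) sk(1)] by blast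
  have liw: "li w1 w2" unfolding li_def
  proof (intro allI impI)
    fix s t assume st: "s *s w1 + t *s w2 = 0"
    have "s *s u + t *s v = s *s z1 + t *s z2" using st unfolding wz1(3) wz2(3)
      by (simp add: vec_eq_iff algebra_simps)
    moreover have "s *s z1 + t *s z2 \<in> B2" using line_comb[OF l(2) wz1(2) wz2(2)] .
    moreover have "s *s u + t *s v \<in> B3" using uv(2) by blast
    ultimately have "s *s u + t *s v = 0" using sk(3) by auto
    then show "s = 0 \<and> t = 0" using uv(1) unfolding li_def by blast
  qed
  have liz: "li z1 z2" unfolding li_def
  proof (intro allI impI)
    fix s t assume st: "s *s z1 + t *s z2 = 0"
    have "s *s u + t *s v = s *s w1 + t *s w2" using st unfolding wz1(3) wz2(3)
      by (simp add: vec_eq_iff algebra_simps)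
    moreover have "s *s w1 + t *s w2 \<in> B1" using line_comb[OF l(1) wz1(1) wz2(1)] .
    moreover have "s *s u + t *s v \<in> B3" using uv(2) by blast
    ultimately have "s *s u + t *s v = 0" using sk(2) by auto
    then show "s = 0 \<and> t = 0" using uv(1) unfolding li_def by blast
  qed
  have i4: "ind4 w1 w2 z1 z2" unfolding ind4_def
  proof (intro allI impI)
    fix c1 c2 c3 c4 assume e: "c1 *s w1 + c2 *s w2 + c3 *s z1 + c4 *s z2 = 0"
    have e2: "c1 *s w1 + c2 *s w2 = (- c3) *s z1 + (- c4) *s z2"
    proof -
      have "c1 *s w1 + c2 *s w2 = (c1 *s w1 + c2 *s w2 + c3 *s z1 + c4 *s z2) - (c3 *s z1 + c4 *s z2)"
        by (simp add: algebra_simps)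
      also have "\<dots> = (- c3) *s z1 + (- c4) *s z2" unfolding e by (simp add: vec_eq_iff)
      finally show ?thesis .
    qed
    have "c1 *s w1 + c2 *s w2 \<in> B1" using line_comb[OF l(1) wz1(1) wz2(1)] .
    moreover have "c1 *s w1 + c2 *s w2 \<in> B2" unfolding e2 using line_comb[OF l(2) wz1(2) wz2(2)] .
    ultimately have z: "c1 *s w1 + c2 *s w2 = 0" using sk(1) by auto
    then have "c1 = 0 \<and> c2 = 0" using liw unfolding li_def by blast
    moreover have "(- c3) *s z1 + (- c4) *s z2 = 0" using z e2 by simp
    then have "c3 = 0 \<and> c4 = 0" using liz unfolding li_def by fastforce
    ultimately show "c1 = 0 \<and> c2 = 0 \<and> c3 = 0 \<and> c4 = 0" by simp
  qed
  show ?thesis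
    using i4 line_span2[OF l(1) wz1(1) wz2(1) liw] line_span2[OF l(2) wz1(2) wz2(2) liz] uv(2) wz1(3) wz2(3)
    by blast
qed

lemma transversal:
  assumes ind: "ind4 w1 w2 z1 z2"
    and B1: "B1 = {s *s w1 + t *s w2 | s t. True}"
    and B2: "B2 = {s *s z1 + t *s z2 | s t. True}"
    and B3: "B3 = {s *s (w1 + z1) + t *s (w2 + z2) | s t. True}"
    and T: "proj_line T"
    and y1: "y1 \<in> T" "y1 \<in> B1" "y1 \<noteq> 0"
    and y2: "y2 \<in> T" "y2 \<in> B2" "y2 \<noteq> 0"
    and y3: "y3 \<in> T" "y3 \<in> B3" "y3 \<noteq> 0"
  shows "\<exists>\<sigma> \<tau>. (\<sigma> \<noteq> 0 \<or> \<tau> \<noteq> 0) \<and> (\<forall>\<alpha> \<beta>. Phi w1 w2 z1 z2 \<sigma> \<tau> \<alpha> \<beta> \<in> T)"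
proof -
  obtain \<sigma> \<tau> where e1: "y1 = \<sigma> *s w1 + \<tau> *s w2" using y1(2) B1 by blast
  obtain \<sigma>' \<tau>' where e2: "y2 = \<sigma>' *s z1 + \<tau>' *s z2" using y2(2) B2 by blast
  obtain \<rho> \<rho>' where e3: "y3 = \<rho> *s (w1 + z1) + \<rho>' *s (w2 + z2)" using y3(2) B3 by blast
  have nz1: "\<sigma> \<noteq> 0 \<or> \<tau> \<noteq> 0" using y1(3) e1 by auto
  have nz2: "\<sigma>' \<noteq> 0 \<or> \<tau>' \<noteq> 0" using y2(3) e2 by auto
  have nz3: "\<rho> \<noteq> 0 \<or> \<rho>' \<noteq> 0" using y3(3) e3 by auto
  have "li y1 y2" unfolding li_def
  proof (intro allI impI)
    fix s t assume st: "s *s y1 + t *s y2 = 0"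
    have "(s * \<sigma>) *s w1 + (s * \<tau>) *s w2 + (t * \<sigma>') *s z1 + (t * \<tau>') *s z2 = 0 *s w1 + 0 *s w2 + 0 *s z1 + 0 *s z2"
      using st unfolding e1 e2 by (simp add: vec_eq_iff algebra_simps)
    from ind4_eq[OF ind this] nz1 nz2 show "s = 0 \<and> t = 0" by auto
  qed
  then obtain k m where km: "y3 = k *s y1 + m *s y2" using line_span2[OF T y1(1) y2(1)] y3(1) by blast
  have "\<rho> *s w1 + \<rho>' *s w2 + \<rho> *s z1 + \<rho>' *s z2 = (k * \<sigma>) *s w1 + (k * \<tau>) *s w2 + (m * \<sigma>') *s z1 + (m * \<tau>') *s z2"
    using km unfolding e1 e2 e3 by (simp add: vec_eq_iff algebra_simps)
  from ind4_eq[OF ind this] have c: "\<rho> = k * \<sigma>" "\<rho>' = k * \<tau>" "\<rho> = m * \<sigma>'" "\<rho>' = m * \<tau>'" by auto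
  have k0: "k \<noteq> 0" using c nz3 by auto
  have sig: "\<sigma> = (m / k) * \<sigma>'" "\<tau> = (m / k) * \<tau>'" using c k0 by (auto simp: field_simps)
  have zz: "\<sigma> *s z1 + \<tau> *s z2 = (m / k) *s y2" unfolding e2 sig by (simp add: vec_eq_iff algebra_simps)
  have "Phi w1 w2 z1 z2 \<sigma> \<tau> \<alpha> \<beta> = \<alpha> *s y1 + (\<beta> * (m / k)) *s y2" for \<alpha> \<beta>
    unfolding Phi_def e1[symmetric] zz by simp
  then have "\<forall>\<alpha> \<beta>. Phi w1 w2 z1 z2 \<sigma> \<tau> \<alpha> \<beta> \<in> T" using line_comb[OF T y1(1) y2(1)] by simp
  then show ?thesis using nz1 by blast
qed

lemma li_phi: assumes "ind4 w1 w2 z1 z2" "\<sigma> \<noteq> 0 \<or> \<tau> \<noteq> 0"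
  shows "li (Phi w1 w2 z1 z2 \<sigma> \<tau> 1 0) (Phi w1 w2 z1 z2 \<sigma> \<tau> 0 1)"
  unfolding li_def
proof (intro allI impI)
  fix s t assume st: "s *s Phi w1 w2 z1 z2 \<sigma> \<tau> 1 0 + t *s Phi w1 w2 z1 z2 \<sigma> \<tau> 0 1 = 0"
  have "(s * \<sigma>) *s w1 + (s * \<tau>) *s w2 + (t * \<sigma>) *s z1 + (t * \<tau>) *s z2 = 0 *s w1 + 0 *s w2 + 0 *s z1 + 0 *s z2"
    using st unfolding Phi_def by (simp add: vec_eq_iff algebra_simps)
  from ind4_eq[OF assms(1) this] assms(2) show "s = 0 \<and> t = 0" by auto
qed

lemma phi_scale: "Phi w1 w2 z1 z2 (k * s) (k * t) \<alpha> \<beta> = Phi w1 w2 z1 z2 s t (k * \<alpha>) (k * \<beta>)"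
  unfolding Phi_def by (simp add: vec_eq_iff algebra_simps)

lemma prop_ex: assumes "s' \<noteq> 0 \<or> t' \<noteq> 0" "s * t' = s' * (t::'a::field)"
  shows "\<exists>k. s = k * s' \<and> t = k * t'"
proof (cases "s' = 0")
  case True
  then have "t' \<noteq> 0" using assms by simp
  then show ?thesis using True assms(2) by (intro exI[of _ "t / t'"]) (auto simp: field_simps)
next
  case False
  then show ?thesis using assms(2) by (intro exI[of _ "s / s'"]) (auto simp: field_simps)
qed

lemma phi_split: "Phi w1 w2 z1 z2 s t \<alpha> \<beta> = s *s (\<alpha> *s w1 + \<beta> *s z1) + t *s (\<alpha> *s w2 + \<beta> *s z2)"
  unfolding Phi_def by (simp add: vec_eq_iff algebra_simps)

lemma K1_add: "K1 c x (d + e) = K1 c x d + K1 c x e"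
  unfolding K1_def by (simp add: sum.distrib algebra_simps)
lemma K1_scale: "K1 c x (k *s d) = k * K1 c x d"
  unfolding K1_def by (simp add: sum_distrib_left algebra_simps)
lemma K1_axis: "K1 c x (axis m 1) = cubic_deriv c m x"
proof -
  have "K1 c x (axis m 1) = (\<Sum>ma\<in>UNIV. if ma = m then cubic_deriv c ma x else 0)"
    unfolding K1_def by (intro sum.cong) (auto simp: axis_def)
  then show ?thesis by simp
qed

context DS begin

lemma at_most_three:
  fixes T :: "nat \<Rightarrow> ('a^4) set"
  assumes T: "\<And>i. i \<in> {1..4} \<Longrightarrow> proj_line (T i)"
    and TS: "\<And>i x. i \<in> {1..4} \<Longrightarrow> x \<in> T i \<Longrightarrow> F x = 0"
    and Tm: "\<And>i k. i \<in> {1..4} \<Longrightarrow> k \<in> {1,2,3} \<Longrightarrow> \<exists>y. y \<noteq> 0 \<and> y \<in> T i \<and> y \<in> b k"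
    and dist: "\<And>i j. i \<in> {1..4} \<Longrightarrow> j \<in> {1..4} \<Longrightarrow> i \<noteq> j \<Longrightarrow> T i \<noteq> T j"
  shows False
proof -
  obtain w1 w2 z1 z2 where W: "ind4 w1 w2 z1 z2" "b 1 = {s *s w1 + t *s w2 | s t. True}"
     "b 2 = {s *s z1 + t *s z2 | s t. True}" "b 3 = {s *s (w1 + z1) + t *s (w2 + z2) | s t. True}"
    using basis3[OF lb[of 1] lb[of 2] lb[of 3] skew_b[of 1 2] skew_b[of 1 3] skew_b[of 2 3]] by auto
  let ?P = "Phi w1 w2 z1 z2"
  have "\<forall>i\<in>{1..4}. \<exists>st. (fst st \<noteq> 0 \<or> snd st \<noteq> 0) \<and> (\<forall>\<alpha> \<beta>. ?P (fst st) (snd st) \<alpha> \<beta> \<in> T i)"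
  proof
    fix i assume i: "i \<in> {1..4::nat}"
    obtain y1 where y1: "y1 \<noteq> 0" "y1 \<in> T i" "y1 \<in> b 1" using Tm[OF i, of 1] by auto
    obtain y2 where y2: "y2 \<noteq> 0" "y2 \<in> T i" "y2 \<in> b 2" using Tm[OF i, of 2] by auto
    obtain y3 where y3: "y3 \<noteq> 0" "y3 \<in> T i" "y3 \<in> b 3" using Tm[OF i, of 3] by auto
    from transversal[OF W(1) W(2) W(3) W(4) T[OF i] y1(2,3,1) y2(2,3,1) y3(2,3,1)]
    show "\<exists>st. (fst st \<noteq> 0 \<or> snd st \<noteq> 0) \<and> (\<forall>\<alpha> \<beta>. ?P (fst st) (snd st) \<alpha> \<beta> \<in> T i)" by auto
  qed
  then have "\<exists>st. \<forall>i\<in>{1..4}. (fst (st i) \<noteq> 0 \<or> snd (st i) \<noteq> 0) \<and> (\<forall>\<alpha> \<beta>. ?P (fst (st i)) (snd (st i)) \<alpha> \<beta> \<in> T i)"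
    by (rule bchoice)
  then obtain st where st: "\<forall>i\<in>{1..4}. (fst (st i) \<noteq> 0 \<or> snd (st i) \<noteq> 0) \<and> (\<forall>\<alpha> \<beta>. ?P (fst (st i)) (snd (st i)) \<alpha> \<beta> \<in> T i)"
    by (elim exE) blast
  define \<sigma> where "\<sigma> i = fst (st i)" for i
  define \<tau> where "\<tau> i = snd (st i)" for i
  have stt: "\<And>i. i \<in> {1..4} \<Longrightarrow> (\<sigma> i \<noteq> 0 \<or> \<tau> i \<noteq> 0) \<and> (\<forall>\<alpha> \<beta>. ?P (\<sigma> i) (\<tau> i) \<alpha> \<beta> \<in> T i)"
    using st unfolding \<sigma>_def \<tau>_def by blast
  have np: "\<sigma> i * \<tau> j \<noteq> \<sigma> j * \<tau> i" if ij: "i \<in> {1..4}" "j \<in> {1..4}" "i \<noteq> j" for i j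
  proof
    assume eq: "\<sigma> i * \<tau> j = \<sigma> j * \<tau> i"
    have "\<sigma> j \<noteq> 0 \<or> \<tau> j \<noteq> 0" using stt[OF ij(2)] by blast
    then obtain k where k: "\<sigma> i = k * \<sigma> j" "\<tau> i = k * \<tau> j"
      using prop_ex[OF _ eq] by blast
    have inj: "?P (\<sigma> i) (\<tau> i) \<alpha> \<beta> \<in> T j" for \<alpha> \<beta>
      unfolding k phi_scale using stt[OF ij(2)] by blast
    have li: "li (?P (\<sigma> i) (\<tau> i) 1 0) (?P (\<sigma> i) (\<tau> i) 0 1)" using li_phi[OF W(1)] stt[OF ij(1)] by blast
    have m1: "?P (\<sigma> i) (\<tau> i) 1 0 \<in> T i" "?P (\<sigma> i) (\<tau> i) 0 1 \<in> T i" using stt[OF ij(1)] by blast+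
    have "T i = T j"
      using line_span2[OF T[OF ij(1)] m1 li] line_span2[OF T[OF ij(2)] inj inj li] by simp
    then show False using dist ij by blast
  qed
  obtain x where x: "x \<noteq> 0" "x \<in> a 1" "x \<in> b 2" using meet_ab[of 1 2] by auto
  obtain \<sigma>0 \<tau>0 where x0: "x = \<sigma>0 *s z1 + \<tau>0 *s z2" using W(3) x(3) by blast
  define u0 where "u0 = \<sigma>0 *s w1 + \<tau>0 *s w2"
  have Pz: "F (?P \<sigma>0 \<tau>0 \<alpha> \<beta>) = 0" for \<alpha> \<beta>
    unfolding phi_split
  proof (rule line_zero_4[where I="{1..4}" and s=\<sigma> and t=\<tau>])
    show "finite {1..4::nat}" "card {1..4::nat} = 4" by auto
    show "\<And>i j. i \<in> {1..4} \<Longrightarrow> j \<in> {1..4} \<Longrightarrow> i \<noteq> j \<Longrightarrow> \<sigma> i * \<tau> j \<noteq> \<sigma> j * \<tau> i" by (rule np)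
    fix i assume i: "i \<in> {1..4::nat}"
    have "?P (\<sigma> i) (\<tau> i) \<alpha> \<beta> \<in> T i" using stt[OF i] by blast
    then show "F (\<sigma> i *s (\<alpha> *s w1 + \<beta> *s z1) + \<tau> i *s (\<alpha> *s w2 + \<beta> *s z2)) = 0"
      using TS[OF i] unfolding phi_split by blast
  qed
  have xu: "x + t *s u0 = ?P \<sigma>0 \<tau>0 t 1" for t
    unfolding Phi_def x0 u0_def by (simp add: vec_eq_iff algebra_simps)
  have u0nz: "u0 \<notin> hp (\<pi> 2 1)"
  proof
    assume u: "u0 \<in> hp (\<pi> 2 1)"
    have "u0 + x = \<sigma>0 *s (w1 + z1) + \<tau>0 *s (w2 + z2)" unfolding u0_def x0 by (simp add: vec_eq_iff algebra_simps)
    then have "u0 + x \<in> b 3" using W(4) by blast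
    then have "u0 + x \<in> hp (\<pi> 3 1)" using b_sub[of 3 1] by auto
    moreover have "x \<in> hp (\<pi> 2 1)" using b_sub[of 2 1] x(3) by auto
    then have "u0 + x \<in> hp (\<pi> 2 1)" using u by (simp add: hp_def)
    ultimately have ux: "u0 + x \<in> a 1" using inter_a[of 2 1 3] by auto
    have "1 *s (u0 + x) + (-1) *s x = u0" by simp
    then have "u0 \<in> a 1" using line_comb[OF la[of 1] ux x(2), of 1 "-1"] by simp
    moreover have "u0 \<in> b 1" using W(2) u0_def by blast
    ultimately have "u0 = 0" using noab[of 1] by auto
    then have "\<sigma>0 *s w1 + \<tau>0 *s w2 + 0 *s z1 + 0 *s z2 = 0 *s w1 + 0 *s w2 + 0 *s z1 + 0 *s z2"
      unfolding u0_def by simp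
    then have "\<sigma>0 = 0 \<and> \<tau>0 = 0" using ind4_eq[OF W(1)] by blast
    then show False using x(1) x0 by simp
  qed
  have Kb: "K1 c x y = 0" if hy: "y \<in> hp (\<pi> 2 1)" for y
  proof -
    obtain y1 y2 where y: "y = y1 + y2" "y1 \<in> b 2" "y2 \<in> a 1"
      using hy hpeq[of 2 1] unfolding span2_def by auto
    have "K1 c x y1 = 0"
    proof (rule deriv_vanish[OF inf])
      fix t
      have "x + t *s y1 = 1 *s x + t *s y1" by simp
      then have "x + t *s y1 \<in> b 2" using line_comb[OF lb[of 2] x(3) y(2), of 1 t] by simp
      then show "F (x + t *s y1) = 0" using Sb[of 2] by simp
    qed
    moreover have "K1 c x y2 = 0"
    proof (rule deriv_vanish[OF inf])
      fix t
      have "x + t *s y2 = 1 *s x + t *s y2" by simp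
      then have "x + t *s y2 \<in> a 1" using line_comb[OF la[of 1] x(2) y(3), of 1 t] by simp
      then show "F (x + t *s y2) = 0" using Sa[of 1] by simp
    qed
    ultimately show ?thesis unfolding y K1_add by simp
  qed
  have Ku: "K1 c x u0 = 0" by (rule deriv_vanish[OF inf]) (simp add: xu Pz)
  have all: "K1 c x e = 0" for e
  proof -
    define f where "f = lform (\<pi> 2 1)"
    have fu: "f u0 \<noteq> 0" using u0nz unfolding f_def hp_def by simp
    have "f (e - (f e / f u0) *s u0) = 0" unfolding f_def lform_diff lform_scale using fu unfolding f_def by simp
    then have "e - (f e / f u0) *s u0 \<in> hp (\<pi> 2 1)" unfolding hp_def f_def by simp
    then have "K1 c x (e - (f e / f u0) *s u0) = 0" by (rule Kb)
    moreover have "K1 c x e = K1 c x ((e - (f e / f u0) *s u0) + (f e / f u0) *s u0)" by simp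
    ultimately show "K1 c x e = 0" using Ku by (simp only: K1_add K1_scale) simp
  qed
  have "\<forall>m. cubic_deriv c m x = 0"
  proof
    fix m show "cubic_deriv c m x = 0" using all[of "axis m 1"] unfolding K1_axis .
  qed
  moreover have "F x = 0" using Sb[of 2] x(3) by simp
  ultimately show False using smooth x(1) unfolding smooth_cubic_def by blast
qed

end

lemma line_nonzero: assumes "proj_line L" shows "\<exists>x\<in>L. x \<noteq> 0"
proof -
  obtain u v where "li u v" "L = vec.span {u, v}" using assms proj_line_li by blast
  then show ?thesis using li_indep(3) vec.span_base[of u "{u,v}"] by blast
qed

lemma span2_comm: "span2 L M = span2 M L"
  unfolding span2_def by (metis (no_types, lifting) add.commute)

context DS begin

lemma a_distinct: assumes "i \<in> {1..6}" "j \<in> {1..6}" "i \<noteq> j" shows "a i \<noteq> a j"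
proof
  assume e: "a i = a j"
  obtain x where "x \<in> a i" "x \<noteq> 0" using line_nonzero[OF la[OF assms(1)]] by blast
  then show False using skew_a[OF assms] e by blast
qed

lemma allnz: assumes p: "p 1 \<noteq> 0" "p 2 \<noteq> 0" "p 3 \<noteq> 0" and L: "proj_line (planes_locus M p)"
  shows "planes_locus M p \<in> a ` {1..6}"
proof (rule ccontr)
  assume nin: "planes_locus M p \<notin> a ` {1..6}"
  let ?L = "planes_locus M p"
  have LS: "F x = 0" if x: "x \<in> ?L" for x
  proof -
    define A where "A = lform (\<pi> 1 2) x"
    define B where "B = lform (\<pi> 1 3) x"
    define C where "C = lform (\<pi> 2 1) x"
    define D where "D = lform (\<pi> 2 3) x"
    define E where "E = lform (\<pi> 3 1) x"
    define G where "G = lform (\<pi> 3 2) x"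
    have e: "p 2 * A + p 3 * B = 0" "p 1 * C + p 3 * D = 0" "p 1 * E + p 2 * G = 0"
      using x unfolding locus_eq A_def B_def C_def D_def E_def G_def by auto
    have B: "B = - (p 2 * A) / p 3" using e(1) p(3) by (simp add: field_simps add_eq_0_iff2)
    have C: "C = - (p 3 * D) / p 1" using e(2) p(1) by (simp add: field_simps add_eq_0_iff2)
    have G: "G = - (p 1 * E) / p 2" using e(3) p(2) by (simp add: field_simps add_eq_0_iff2)
    have "A * D * E + B * C * G = 0" unfolding B C G using p by (simp add: field_simps)
    then have "\<mu> * F x = 0" using scal unfolding A_def B_def C_def D_def E_def G_def by metis
    then show ?thesis using mu by simp
  qed
  have Lm: "\<exists>y. y \<noteq> 0 \<and> y \<in> ?L \<and> y \<in> b k" if k: "k \<in> {1,2,3}" for k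
  proof -
    have c1: "\<exists>y. y \<noteq> 0 \<and> y \<in> ?L \<and> y \<in> b 1"
    proof -
      obtain y where y: "y \<in> ?L" "y \<noteq> 0" "lform (\<pi> 1 2) y = 0" using line_meets_hp[OF L] by blast
      then have "lform (\<pi> 1 3) y = 0" using p unfolding locus_eq by auto
      then have "y \<in> hp (\<pi> 1 2) \<inter> hp (\<pi> 1 3)" using y by (simp add: hp_def)
      then have "y \<in> b 1" using inter_b[of 1 2 3] by auto
      then show ?thesis using y by blast
    qed
    have c2: "\<exists>y. y \<noteq> 0 \<and> y \<in> ?L \<and> y \<in> b 2"
    proof -
      obtain y where y: "y \<in> ?L" "y \<noteq> 0" "lform (\<pi> 2 1) y = 0" using line_meets_hp[OF L] by blast
      then have "lform (\<pi> 2 3) y = 0" using p unfolding locus_eq by auto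
      then have "y \<in> hp (\<pi> 2 1) \<inter> hp (\<pi> 2 3)" using y by (simp add: hp_def)
      then have "y \<in> b 2" using inter_b[of 2 1 3] by auto
      then show ?thesis using y by blast
    qed
    have c3: "\<exists>y. y \<noteq> 0 \<and> y \<in> ?L \<and> y \<in> b 3"
    proof -
      obtain y where y: "y \<in> ?L" "y \<noteq> 0" "lform (\<pi> 3 1) y = 0" using line_meets_hp[OF L] by blast
      then have "lform (\<pi> 3 2) y = 0" using p unfolding locus_eq by auto
      then have "y \<in> hp (\<pi> 3 1) \<inter> hp (\<pi> 3 2)" using y by (simp add: hp_def)
      then have "y \<in> b 3" using inter_b[of 3 1 2] by auto
      then show ?thesis using y by blast
    qed
    show ?thesis using k c1 c2 c3 by auto
  qed
  define T where "T i = (if i = 1 then a 4 else if i = 2 then a 5 else if i = 3 then a 6 else ?L)" for i :: nat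
  have i4: "i \<in> {1..4} \<Longrightarrow> i = 1 \<or> i = 2 \<or> i = 3 \<or> i = 4" for i :: nat by auto
  have ne: "a 4 \<noteq> a 5" "a 4 \<noteq> a 6" "a 5 \<noteq> a 6" "?L \<noteq> a 4" "?L \<noteq> a 5" "?L \<noteq> a 6"
    using a_distinct[of 4 5] a_distinct[of 4 6] a_distinct[of 5 6] nin by auto
  show False
  proof (rule at_most_three[of T])
    fix i assume "i \<in> {1..4::nat}"
    then show "proj_line (T i)" unfolding T_def using L la[of 4] la[of 5] la[of 6] by (auto dest: i4)
  next
    fix i x assume "i \<in> {1..4::nat}" "x \<in> T i"
    then show "F x = 0" unfolding T_def using LS Sa[of 4] Sa[of 5] Sa[of 6]
      by (auto dest!: i4 split: if_splits)
  next
    fix i k assume i: "i \<in> {1..4::nat}" and k: "k \<in> {1,2,3::nat}"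
    have k6: "k \<in> {1..6}" using k by auto
    show "\<exists>y. y \<noteq> 0 \<and> y \<in> T i \<and> y \<in> b k"
      using i4[OF i] k meet_ab[of 4 k] meet_ab[of 5 k] meet_ab[of 6 k] Lm[OF k] k6 unfolding T_def
      by auto
  next
    fix i j assume "i \<in> {1..4::nat}" "j \<in> {1..4::nat}" "i \<noteq> j"
    then show "T i \<noteq> T j" unfolding T_def using ne by (auto dest!: i4)
  qed
qed

lemma skew_lines_M: "skew_lines_of M = a ` {1..6}"
proof
  show "skew_lines_of M \<subseteq> a ` {1..6}"
  proof
    fix L assume "L \<in> skew_lines_of M"
    then obtain p where L: "proj_line L" "\<exists>s\<in>{1,2,3}. p s \<noteq> 0" "L = planes_locus M p"
      unfolding skew_lines_of_def by blast
    show "L \<in> a ` {1..6}"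
    proof (cases "p 1 = 0"; cases "p 2 = 0"; cases "p 3 = 0")
      assume "p 1 = 0" "p 2 = 0" "p 3 = 0" then show ?thesis using L(2) by auto
    next
      assume "p 1 = 0" "p 2 = 0" "p 3 \<noteq> 0" then show ?thesis using locus_a3 L(3) by auto
    next
      assume "p 1 = 0" "p 2 \<noteq> 0" "p 3 = 0" then show ?thesis using locus_a2 L(3) by auto
    next
      assume "p 1 = 0" "p 2 \<noteq> 0" "p 3 \<noteq> 0" then show ?thesis using two_nz1 L by auto
    next
      assume "p 1 \<noteq> 0" "p 2 = 0" "p 3 = 0" then show ?thesis using locus_a1 L(3) by auto
    next
      assume "p 1 \<noteq> 0" "p 2 = 0" "p 3 \<noteq> 0" then show ?thesis using two_nz2 L by auto
    next
      assume "p 1 \<noteq> 0" "p 2 \<noteq> 0" "p 3 = 0" then show ?thesis using two_nz3 L by auto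
    next
      assume "p 1 \<noteq> 0" "p 2 \<noteq> 0" "p 3 \<noteq> 0" then show ?thesis using allnz L by auto
    qed
  qed
next
  show "a ` {1..6} \<subseteq> skew_lines_of M"
  proof
    fix L assume "L \<in> a ` {1..6}"
    then obtain j where j: "j \<in> {1..6}" "L = a j" by blast
    have "\<exists>p. (\<exists>s\<in>{1,2,3}. p s \<noteq> 0) \<and> a j = planes_locus M p"
    proof (cases "j \<in> {4,5,6}")
      case True then show ?thesis by (rule a_high)
    next
      case False
      then have "j = 1 \<or> j = 2 \<or> j = 3" using j by auto
      then show ?thesis
      proof (elim disjE)
        assume "j = 1" then show ?thesis
          using locus_a1[of "\<lambda>s. if s = 1 then 1 else 0"] by (intro exI[of _ "\<lambda>s. if s = 1 then 1 else 0"]) auto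
      next
        assume "j = 2" then show ?thesis
          using locus_a2[of "\<lambda>s. if s = 2 then 1 else 0"] by (intro exI[of _ "\<lambda>s. if s = 2 then 1 else 0"]) auto
      next
        assume "j = 3" then show ?thesis
          using locus_a3[of "\<lambda>s. if s = 3 then 1 else 0"] by (intro exI[of _ "\<lambda>s. if s = 3 then 1 else 0"]) auto
      qed
    qed
    then show "L \<in> skew_lines_of M" using la[OF j(1)] j(2) unfolding skew_lines_of_def by auto
  qed
qed

end

theorem mainTheorem2:
  fixes c :: "4 \<Rightarrow> 4 \<Rightarrow> 4 \<Rightarrow> 'a::alg_closed_field"
    and a b :: "nat \<Rightarrow> ('a ^ 4) set"
    and \<pi> :: "nat \<Rightarrow> nat \<Rightarrow> 'a ^ 4"
  assumes smooth: "smooth_cubic c"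
    and ds: "double_six c a b"
    and planes: "\<forall>i\<in>{1..6}. \<forall>j\<in>{1..6}. i \<noteq> j \<longrightarrow>
                   \<pi> i j \<noteq> 0 \<and> {x. lform (\<pi> i j) x = 0} = span2 (b i) (a j)"
    and scaling: "\<exists>\<mu>. \<mu> \<noteq> 0 \<and> (\<forall>x.
        lform (\<pi> 1 2) x * lform (\<pi> 2 3) x * lform (\<pi> 3 1) x
      + lform (\<pi> 1 3) x * lform (\<pi> 2 1) x * lform (\<pi> 3 2) x = \<mu> * cubic_eval c x)"
  shows "skew_lines_of (\<lambda>r s. if r = s then 0 else \<pi> r s) = a ` {1..6}
       \<and> skew_lines_of (lmat_transpose (\<lambda>r s. if r = s then 0 else \<pi> r s)) = b ` {1..6}"
proof -
  obtain \<mu> where mu: "\<mu> \<noteq> 0" and sc: "\<forall>x.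
        lform (\<pi> 1 2) x * lform (\<pi> 2 3) x * lform (\<pi> 3 1) x
      + lform (\<pi> 1 3) x * lform (\<pi> 2 1) x * lform (\<pi> 3 2) x = \<mu> * cubic_eval c x"
    using scaling by blast
  interpret D1: DS c a b \<pi> \<mu>
    using smooth ds planes mu sc by unfold_locales
  have ds': "double_six c b a"
    using ds unfolding double_six_def meets_def by (auto simp: Int_commute)
  have planes': "\<forall>i\<in>{1..6}. \<forall>j\<in>{1..6}. i \<noteq> j \<longrightarrow>
      (\<lambda>i j. \<pi> j i) i j \<noteq> 0 \<and> {x. lform ((\<lambda>i j. \<pi> j i) i j) x = 0} = span2 (a i) (b j)"
    using planes by (auto simp: span2_comm)
  have sc': "\<forall>x. lform (\<pi> 2 1) x * lform (\<pi> 3 2) x * lform (\<pi> 1 3) x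
      + lform (\<pi> 3 1) x * lform (\<pi> 1 2) x * lform (\<pi> 2 3) x = \<mu> * cubic_eval c x"
  proof
    fix x
    from sc have "lform (\<pi> 1 2) x * lform (\<pi> 2 3) x * lform (\<pi> 3 1) x
      + lform (\<pi> 1 3) x * lform (\<pi> 2 1) x * lform (\<pi> 3 2) x = \<mu> * cubic_eval c x" by blast
    then show "lform (\<pi> 2 1) x * lform (\<pi> 3 2) x * lform (\<pi> 1 3) x
      + lform (\<pi> 3 1) x * lform (\<pi> 1 2) x * lform (\<pi> 2 3) x = \<mu> * cubic_eval c x"
      by (simp add: ac_simps)
  qed
  interpret D2: DS c b a "\<lambda>i j. \<pi> j i" \<mu>
    using smooth ds' planes' mu sc' by unfold_locales simp_all
  have m1: "D1.M = (\<lambda>r s. if r = s then 0 else \<pi> r s)" by (simp add: D1.M_def)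
  have m2: "D2.M = lmat_transpose (\<lambda>r s. if r = s then 0 else \<pi> r s)"
    by (auto simp: D2.M_def lmat_transpose_def fun_eq_iff)
  show ?thesis using D1.skew_lines_M D2.skew_lines_M m1 m2 by simp
qed

end
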